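(* Let $\mu$ be the uniform probability measure on $\{-1,1\}^n$ and let $\nu=e^f d\mu$ be a probability measure on $\{-1,1\}^n$ (with $f:\{-1,1\}^n\to\mathbb{R}$). Let $$\mathcal{I}(\nu)=\int I\big(\nabla\Lambda_\mu(\nabla f(x))\big)\,d\nu(x),$$ where $\nabla f$ is the discrete gradient of $f$. Then $$\mathcal{I}(\nu)\le H(\nu|\mu)+\kappa\int\sup_{y\in\{-1,1\}^n}\langle\nabla f(y),x\rangle\,d\mu(x),$$ where $\kappa$ is a universal constant.
   Context: Discrete gradient: $\nabla f(x)=(\partial_1f(x),\dots,\partial_nf(x))$ with $\partial_if(x)=\frac12(f(x_+)-f(x_-))$, where $x_\pm$ is $x$ with $i$-th coordinate replaced by $\pm1$. $\Lambda_\mu(\xi)=\log\int e^{\langle\xi,x\rangle}d\mu(x)=\sum_i\log\cosh\xi_i$, so $\nabla\Lambda_\mu(\xi)=(\tanh\xi_1,\dots,\tanh\xi_n)$. $I(x)=\sum_{i=1}^n\big(\frac{1+x_i}{2}\log(1+x_i)+\frac{1-x_i}{2}\log(1-x_i)\big)$ on $[-1,1]^n$. $H(\nu|\mu)$ is the relative entropy. *)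

theory Defs
  imports "HOL-Analysis.Analysis"
begin

definition cube :: "nat \<Rightarrow> (nat \<Rightarrow> real) set" where
  "cube n = PiE {..<n} (\<lambda>_. {-1, 1})"

definition unif_int :: "nat \<Rightarrow> ((nat \<Rightarrow> real) \<Rightarrow> real) \<Rightarrow> real" where
  "unif_int n g = (\<Sum>x\<in>cube n. g x) / real (card (cube n))"

definition dpartial :: "((nat \<Rightarrow> real) \<Rightarrow> real) \<Rightarrow> nat \<Rightarrow> (nat \<Rightarrow> real) \<Rightarrow> real" where
  "dpartial f i x = (f (x(i := 1)) - f (x(i := -1))) / 2"

definition dgrad :: "((nat \<Rightarrow> real) \<Rightarrow> real) \<Rightarrow> (nat \<Rightarrow> real) \<Rightarrow> (nat \<Rightarrow> real)" where
  "dgrad f x = (\<lambda>i. dpartial f i x)"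

text \<open>Gradient of Lambda_mu(xi) = sum log cosh xi_i.\<close>
definition grad_Lambda :: "(nat \<Rightarrow> real) \<Rightarrow> (nat \<Rightarrow> real)" where
  "grad_Lambda \<xi> = (\<lambda>i. tanh (\<xi> i))"

definition inner_n :: "nat \<Rightarrow> (nat \<Rightarrow> real) \<Rightarrow> (nat \<Rightarrow> real) \<Rightarrow> real" where
  "inner_n n u v = (\<Sum>i<n. u i * v i)"

definition Irate :: "nat \<Rightarrow> (nat \<Rightarrow> real) \<Rightarrow> real" where
  "Irate n x = (\<Sum>i<n. (1 + x i) / 2 * ln (1 + x i) + (1 - x i) / 2 * ln (1 - x i))"

text \<open>For nu = e^f dmu: the functional I(nu) and the relative entropy H(nu|mu) = int f dnu.\<close>
definition calI :: "nat \<Rightarrow> ((nat \<Rightarrow> real) \<Rightarrow> real) \<Rightarrow> real" where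
  "calI n f = unif_int n (\<lambda>x. exp (f x) * Irate n (grad_Lambda (dgrad f x)))"

definition rel_entropy :: "nat \<Rightarrow> ((nat \<Rightarrow> real) \<Rightarrow> real) \<Rightarrow> real" where
  "rel_entropy n f = unif_int n (\<lambda>x. exp (f x) * f x)"

end

theory Submission
  imports Defs
begin



lemma cube_Suc: "cube (Suc n) = (\<lambda>(s, y). y(n := s)) ` ({-1,1} \<times> cube n)"
  unfolding cube_def lessThan_Suc by (rule PiE_insert_eq)

lemma cube_Suc_inj: "inj_on (\<lambda>(s, y). y(n := s)) ({-1,1} \<times> cube n)"
  unfolding cube_def by (rule inj_combinator) simp

lemma finite_cube[simp]: "finite (cube n)"
  unfolding cube_def by (simp add: finite_PiE)

lemma card_cube: "card (cube n) = 2 ^ n"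
  unfolding cube_def by (simp add: card_PiE eval_nat_numeral)

lemma sum_cube_Suc:
  "(\<Sum>y\<in>cube (Suc n). h y) = (\<Sum>y\<in>cube n. h (y(n := 1)) + h (y(n := -1)))"
proof -
  have "(\<Sum>y\<in>cube (Suc n). h y) = (\<Sum>z\<in>{-1,1} \<times> cube n. h ((\<lambda>(s, y). y(n := s)) z))"
    unfolding cube_Suc by (rule sum.reindex[OF cube_Suc_inj, unfolded comp_def])
  also have "\<dots> = (\<Sum>s\<in>{-1,1}. \<Sum>y\<in>cube n. h (y(n := s)))"
    unfolding sum.cartesian_product by (rule sum.cong) auto
  also have "\<dots> = (\<Sum>y\<in>cube n. h (y(n := 1)) + h (y(n := -1)))"
    by (simp add: sum.distrib add.commute)
  finally show ?thesis .
qed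

lemma cube_mem: "y \<in> cube n \<Longrightarrow> k < n \<Longrightarrow> y k = 1 \<or> y k = -1"
  unfolding cube_def by auto

lemma cube_upd: "y \<in> cube n \<Longrightarrow> k < n \<Longrightarrow> s = 1 \<or> s = -1 \<Longrightarrow> y(k := s) \<in> cube n"
  unfolding cube_def by (auto simp: PiE_def extensional_def Pi_def)

lemma cube_upd_Suc: "y \<in> cube n \<Longrightarrow> s = 1 \<or> s = -1 \<Longrightarrow> y(n := s) \<in> cube (Suc n)"
  unfolding cube_def by (auto simp: PiE_def extensional_def Pi_def)

lemma lemA:
  assumes pre: "\<And>k y z. (\<forall>j<k. y j = z j) \<Longrightarrow> r k y = r k z"
  shows "(\<Sum>y\<in>cube n. \<Prod>k<n. (1 + y k * r k y) / 2) = (1::real)"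
proof (induction n)
  case 0
  then show ?case by (simp add: cube_def)
next
  case (Suc n)
  have e: "(\<Prod>k<n. (1 + (y(n:=s)) k * r k (y(n:=s))) / 2) = (\<Prod>k<n. (1 + y k * r k y) / 2)" for y s
  proof (rule prod.cong[OF refl])
    fix k assume "k \<in> {..<n}"
    then have "r k (y(n:=s)) = r k y" by (intro pre) auto
    with \<open>k \<in> {..<n}\<close> show "(1 + (y(n:=s)) k * r k (y(n:=s))) / 2 = (1 + y k * r k y) / 2" by simp
  qed
  have rn: "r n (y(n:=s)) = r n y" for y s by (intro pre) auto
  have "(\<Sum>y\<in>cube (Suc n). \<Prod>k<Suc n. (1 + y k * r k y) / 2)
     = (\<Sum>y\<in>cube n. (\<Prod>k<n. (1 + y k * r k y) / 2) * ((1 + 1 * r n y) / 2)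
          + (\<Prod>k<n. (1 + y k * r k y) / 2) * ((1 + (-1) * r n y) / 2))"
    unfolding sum_cube_Suc prod.lessThan_Suc e rn by simp
  also have "\<dots> = (\<Sum>y\<in>cube n. (\<Prod>k<n. (1 + y k * r k y) / 2))"
    by (intro sum.cong) (auto simp: field_simps)
  finally show ?case using Suc by simp
qed

lemma lemB:
  fixes c :: "nat \<Rightarrow> real"
  assumes "k < n"
  shows "(\<Sum>y\<in>cube n. (\<Prod>j<n. (1 + y j * c j) / 2) * y k) = c k"
  using assms
proof (induction n)
  case 0
  then show ?case by simp
next
  case (Suc n)
  define P where "P y = (\<Prod>j<n. (1 + y j * c j) / 2)" for y :: "nat \<Rightarrow> real"
  have e: "(\<Prod>j<n. (1 + (y(n:=s)) j * c j) / 2) = P y" for y s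
    unfolding P_def by (rule prod.cong) auto
  have A: "(\<Sum>y\<in>cube n. P y) = 1"
    using lemA[of "\<lambda>j y. c j" n] by (simp add: P_def)
  have L: "(\<Sum>y\<in>cube (Suc n). (\<Prod>j<Suc n. (1 + y j * c j) / 2) * y k)
     = (\<Sum>y\<in>cube n. P y * ((1 + c n) / 2) * (y(n:=1)) k + P y * ((1 - c n) / 2) * (y(n:=-1)) k)"
    unfolding sum_cube_Suc prod.lessThan_Suc e by simp
  show ?case
  proof (cases "k = n")
    case True
    have "(\<Sum>y\<in>cube n. P y * ((1 + c n) / 2) * (y(n:=1)) k + P y * ((1 - c n) / 2) * (y(n:=-1)) k)
        = (\<Sum>y\<in>cube n. c n * P y)"
      using True by (intro sum.cong) (auto simp: field_simps)
    also have "\<dots> = c n" by (simp add: sum_distrib_left[symmetric] A)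
    finally show ?thesis using L True by simp
  next
    case False
    then have "k < n" using Suc by simp
    have "(\<Sum>y\<in>cube n. P y * ((1 + c n) / 2) * (y(n:=1)) k + P y * ((1 - c n) / 2) * (y(n:=-1)) k)
        = (\<Sum>y\<in>cube n. P y * y k)"
      using False by (intro sum.cong) (auto simp: field_simps)
    also have "\<dots> = c k" using Suc.IH[OF \<open>k<n\<close>] by (simp add: P_def)
    finally show ?thesis using L by simp
  qed
qed

definition Pm :: "nat \<Rightarrow> ((nat \<Rightarrow> real) \<Rightarrow> real) \<Rightarrow> nat \<Rightarrow> (nat \<Rightarrow> real) \<Rightarrow> real" where
  "Pm n p k y = (\<Sum>z\<in>cube n. if (\<forall>j<k. z j = y j) then p z else 0)"

definition mm :: "nat \<Rightarrow> ((nat \<Rightarrow> real) \<Rightarrow> real) \<Rightarrow> nat \<Rightarrow> (nat \<Rightarrow> real) \<Rightarrow> real" where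
  "mm n p k y = (Pm n p (Suc k) (y(k:=1)) - Pm n p (Suc k) (y(k:=-1))) / Pm n p k y"

lemma Pm_pre: "(\<forall>j<k. y j = z j) \<Longrightarrow> Pm n p k y = Pm n p k z"
  unfolding Pm_def by (intro sum.cong) auto

lemma mm_pre: "(\<forall>j<k. y j = z j) \<Longrightarrow> mm n p k y = mm n p k z"
proof -
  assume a: "\<forall>j<k. y j = z j"
  have "Pm n p (Suc k) (y(k:=s)) = Pm n p (Suc k) (z(k:=s))" for s
    by (rule Pm_pre) (use a less_Suc_eq in auto)
  moreover have "Pm n p k y = Pm n p k z" by (rule Pm_pre[OF a])
  ultimately show ?thesis unfolding mm_def by simp
qed

lemma Pm_split:
  assumes "y \<in> cube n" "k < n"
  shows "Pm n p k y = Pm n p (Suc k) (y(k:=1)) + Pm n p (Suc k) (y(k:=-1))"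
  unfolding Pm_def sum.distrib[symmetric]
proof (rule sum.cong[OF refl])
  fix z assume z: "z \<in> cube n"
  have "z k = 1 \<or> z k = -1" using cube_mem[OF z assms(2)] .
  then show "(if \<forall>j<k. z j = y j then p z else 0) =
     (if \<forall>j<Suc k. z j = (y(k := 1)) j then p z else 0) + (if \<forall>j<Suc k. z j = (y(k := - 1)) j then p z else 0)"
    by (auto simp: less_Suc_eq)
qed

lemma Pm_ge:
  assumes "y \<in> cube n" "\<And>z. z \<in> cube n \<Longrightarrow> p z > 0"
  shows "Pm n p k y \<ge> p y"
proof -
  have "Pm n p k y = (\<Sum>z\<in>cube n. if (\<forall>j<k. z j = y j) then p z else 0)" by (simp add: Pm_def)
  also have "\<dots> \<ge> (if (\<forall>j<k. y j = y j) then p y else 0)"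
    by (rule member_le_sum) (use assms in \<open>auto intro: less_imp_le\<close>)
  finally show ?thesis by simp
qed

lemma Pm_pos:
  assumes "y \<in> cube n" "\<And>z. z \<in> cube n \<Longrightarrow> p z > 0"
  shows "Pm n p k y > 0"
  using Pm_ge[where p=p and k=k, OF assms] assms by (meson less_le_trans)

lemma mm_bound:
  assumes "y \<in> cube n" "k < n" "\<And>z. z \<in> cube n \<Longrightarrow> p z > 0"
  shows "\<bar>mm n p k y\<bar> < 1"
proof -
  have a: "Pm n p (Suc k) (y(k:=1)) > 0" by (rule Pm_pos[where p=p, OF cube_upd[OF assms(1,2)] assms(3)]) auto
  have b: "Pm n p (Suc k) (y(k:=-1)) > 0" by (rule Pm_pos[where p=p, OF cube_upd[OF assms(1,2)] assms(3)]) auto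
  show ?thesis unfolding mm_def Pm_split[OF assms(1,2)] using a b
    by (auto simp: abs_less_iff field_simps)
qed

lemma mm_factor:
  assumes "y \<in> cube n" "k < n" "\<And>z. z \<in> cube n \<Longrightarrow> p z > 0"
  shows "(1 + y k * mm n p k y) / 2 = Pm n p (Suc k) y / Pm n p k y"
proof -
  have a: "Pm n p (Suc k) (y(k:=1)) > 0" by (rule Pm_pos[where p=p, OF cube_upd[OF assms(1,2)] assms(3)]) auto
  have b: "Pm n p (Suc k) (y(k:=-1)) > 0" by (rule Pm_pos[where p=p, OF cube_upd[OF assms(1,2)] assms(3)]) auto
  have "y k = 1 \<or> y k = -1" using cube_mem[OF assms(1,2)] .
  moreover have "y(k := y k) = y" by simp
  ultimately have c: "(y k = 1 \<and> y(k:=1) = y) \<or> (y k = -1 \<and> y(k:=-1) = y)" by auto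
  show ?thesis using c unfolding mm_def Pm_split[OF assms(1,2)] using a b
    by (auto simp: field_simps)
qed

lemma Pm_0:
  assumes "(\<Sum>z\<in>cube n. p z) = 1"
  shows "Pm n p 0 y = 1"
  using assms by (simp add: Pm_def)

lemma Pm_n:
  assumes "y \<in> cube n"
  shows "Pm n p n y = p y"
proof -
  have "z = y" if "z \<in> cube n" "\<forall>j<n. z j = y j" for z
  proof
    fix j show "z j = y j"
      using that assms by (cases "j < n") (auto simp: cube_def PiE_def extensional_def)
  qed
  then have "Pm n p n y = (\<Sum>z\<in>cube n. if z = y then p z else 0)"
    unfolding Pm_def by (intro sum.cong) auto
  also have "\<dots> = p y" using assms by (simp add: sum.delta)
  finally show ?thesis .
qed

lemma mm_prod:
  assumes "y \<in> cube n" "\<And>z. z \<in> cube n \<Longrightarrow> p z > 0" "(\<Sum>z\<in>cube n. p z) = 1"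
  shows "(\<Prod>k<n. (1 + y k * mm n p k y) / 2) = p y"
proof -
  have "(\<Prod>k<n. (1 + y k * mm n p k y) / 2) = (\<Prod>k<n. Pm n p (Suc k) y / Pm n p k y)"
    by (rule prod.cong) (auto simp: mm_factor[OF assms(1) _ assms(2)])
  also have "\<dots> = Pm n p n y / Pm n p 0 y"
    by (rule prod_lessThan_telescope) (use Pm_pos[where p=p, OF assms(1,2)] in \<open>metis less_irrefl\<close>)
  also have "\<dots> = p y" using Pm_0[OF assms(3)] Pm_n[OF assms(1)] by simp
  finally show ?thesis .
qed



definition Ifun :: "real \<Rightarrow> real" where
  "Ifun t = (1 + t) / 2 * ln (1 + t) + (1 - t) / 2 * ln (1 - t)"

lemma ln_ineq:
  fixes u v :: real
  assumes "u \<ge> 0" "v > 0"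
  shows "u * ln v \<le> u * ln u + (v - u)"
proof (cases "u = 0")
  case True then show ?thesis using assms by simp
next
  case False
  then have u: "u > 0" using assms by simp
  have "ln (v / u) \<le> v / u - 1" by (rule ln_le_minus_one) (use u assms in simp)
  then have "ln v - ln u \<le> v / u - 1" using u assms by (simp add: ln_div)
  then have "u * (ln v - ln u) \<le> u * (v / u - 1)" using u by (intro mult_left_mono) auto
  moreover have "u * (v / u - 1) = v - u" using u by (simp add: field_simps)
  ultimately show ?thesis by (simp add: right_diff_distrib)
qed

lemma Ifun_tangent:
  fixes t m :: real
  assumes "\<bar>t\<bar> < 1" "\<bar>m\<bar> \<le> 1"
  shows "Ifun t + artanh t * (m - t) \<le> Ifun m"
proof -
  have "1 + t > 0" "1 - t > 0" using assms by auto
  then have a: "artanh t = (ln (1 + t) - ln (1 - t)) / 2"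
    unfolding artanh_def by (simp add: ln_div)
  have e: "Ifun t + artanh t * (m - t) = ((1 + m) * ln (1 + t) + (1 - m) * ln (1 - t)) / 2"
    unfolding Ifun_def a by (simp add: field_simps)
  have i1: "(1 + m) * ln (1 + t) \<le> (1 + m) * ln (1 + m) + ((1 + t) - (1 + m))"
    by (rule ln_ineq) (use assms in auto)
  have i2: "(1 - m) * ln (1 - t) \<le> (1 - m) * ln (1 - m) + ((1 - t) - (1 - m))"
    by (rule ln_ineq) (use assms in auto)
  show ?thesis unfolding e using i1 i2 by (simp add: Ifun_def field_simps)
qed

lemma Ifun_alt:
  fixes s m :: real
  assumes "s = 1 \<or> s = -1" "\<bar>m\<bar> < 1"
  shows "Ifun m = ln (1 + s * m) - (s - m) * artanh m"
proof -
  have "1 + m > 0" "1 - m > 0" using assms by auto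
  then have a: "artanh m = (ln (1 + m) - ln (1 - m)) / 2"
    unfolding artanh_def by (simp add: ln_div)
  show ?thesis using assms(1) unfolding Ifun_def a by (auto simp: field_simps)
qed

lemma tanh_half_diff:
  fixes a b :: real
  shows "tanh ((a - b) / 2) = (exp a - exp b) / (exp a + exp b)"
proof -
  have hE: "exp (- 2 * ((a - b) / 2)) = exp b / exp a" by (simp add: exp_diff[symmetric])
  have p: "exp a + exp b > 0" by (simp add: add_pos_pos)
  have A: "exp a > 0" by simp
  have e1: "1 - exp b / exp a = (exp a - exp b) / exp a" using A by (simp add: diff_divide_distrib)
  have e2: "1 + exp b / exp a = (exp a + exp b) / exp a" using A by (simp add: add_divide_distrib)
  show ?thesis unfolding tanh_real_altdef hE e1 e2 using A by simp
qed

lemma factor_id: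
  fixes s m a :: real
  assumes "s = 1 \<or> s = -1"
  shows "(1 + s * (m + a * (1 - m^2))) / 2 = (1 + s * m) / 2 * (1 + a * (s - m))"
  using assms by (auto simp: field_simps power2_eq_square)

lemma flip_sum:
  fixes h :: "(nat \<Rightarrow> real) \<Rightarrow> real"
  assumes "k < n"
  shows "(\<Sum>x\<in>cube n. h x) = (\<Sum>x\<in>cube n. (h (x(k:=1)) + h (x(k:=-1))) / 2)"
proof -
  define \<sigma> where "\<sigma> x = x(k := - x k)" for x :: "nat \<Rightarrow> real"
  have mem: "\<sigma> x \<in> cube n" if "x \<in> cube n" for x
    unfolding \<sigma>_def by (rule cube_upd[OF that assms]) (use cube_mem[OF that assms] in auto)
  have inv: "\<sigma> (\<sigma> x) = x" for x unfolding \<sigma>_def by auto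
  have r: "(\<Sum>x\<in>cube n. h (\<sigma> x)) = (\<Sum>x\<in>cube n. h x)"
    by (rule sum.reindex_bij_witness[where i=\<sigma> and j=\<sigma>]) (auto simp: inv mem)
  have p: "h x + h (\<sigma> x) = h (x(k:=1)) + h (x(k:=-1))" if "x \<in> cube n" for x
  proof -
    have "x k = 1 \<or> x k = -1" using cube_mem[OF that assms] .
    moreover have "x(k := x k) = x" by simp
    ultimately show ?thesis unfolding \<sigma>_def by (metis add.commute minus_minus)
  qed
  have "(\<Sum>x\<in>cube n. h x) = ((\<Sum>x\<in>cube n. h x) + (\<Sum>x\<in>cube n. h (\<sigma> x))) / 2" using r by simp
  also have "\<dots> = (\<Sum>x\<in>cube n. (h x + h (\<sigma> x))) / 2"
    by (simp add: sum.distrib)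
  also have "\<dots> = (\<Sum>x\<in>cube n. (h x + h (\<sigma> x)) / 2)"
    by (rule sum_divide_distrib)
  also have "\<dots> = (\<Sum>x\<in>cube n. (h (x(k:=1)) + h (x(k:=-1))) / 2)"
    by (intro sum.cong) (auto simp: p)
  finally show ?thesis .
qed



lemma prod_factor_lemma:
  assumes y: "y \<in> cube n" and pos: "\<And>z. z \<in> cube n \<Longrightarrow> p z > 0" and s1: "(\<Sum>z\<in>cube n. p z) = 1"
  shows "(\<Prod>j<n. (1 + y j * (mm n p j y + b j * (1 - (mm n p j y)^2))) / 2)
       = p y * (\<Prod>j<n. 1 + b j * (y j - mm n p j y))"
proof -
  have "(\<Prod>j<n. (1 + y j * (mm n p j y + b j * (1 - (mm n p j y)^2))) / 2)
      = (\<Prod>j<n. (1 + y j * mm n p j y) / 2 * (1 + b j * (y j - mm n p j y)))"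
    by (rule prod.cong[OF refl], rule factor_id, rule cube_mem[OF y]) simp
  also have "\<dots> = (\<Prod>j<n. (1 + y j * mm n p j y) / 2) * (\<Prod>j<n. 1 + b j * (y j - mm n p j y))"
    by (rule prod.distrib)
  also have "\<dots> = p y * (\<Prod>j<n. 1 + b j * (y j - mm n p j y))"
    using mm_prod[where p=p, OF y pos s1] by simp
  finally show ?thesis .
qed

lemma martingale_zero:
  assumes pos: "\<And>z. z \<in> cube n \<Longrightarrow> p z > 0" and s1: "(\<Sum>z\<in>cube n. p z) = 1" and k: "k < n"
  shows "(\<Sum>y\<in>cube n. p y * ((y k - mm n p k y) * artanh (mm n p k y))) = 0"
proof -
  define b where "b j y = (if j = k then artanh (mm n p k y) else 0)" for j y
  define r where "r j y = mm n p j y + b j y * (1 - (mm n p j y)^2)" for j y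
  have pre: "r j y = r j z" if "\<forall>i<j. y i = z i" for j y z
    unfolding r_def b_def using mm_pre[OF that, of n p] by auto
  have A: "(\<Sum>y\<in>cube n. \<Prod>j<n. (1 + y j * r j y) / 2) = 1" by (rule lemA[OF pre])
  have B: "(\<Prod>j<n. (1 + y j * r j y) / 2) = p y * (1 + artanh (mm n p k y) * (y k - mm n p k y))"
    if y: "y \<in> cube n" for y
  proof -
    have "(\<Prod>j<n. (1 + y j * r j y) / 2) = p y * (\<Prod>j<n. 1 + b j y * (y j - mm n p j y))"
      unfolding r_def by (rule prod_factor_lemma[OF y pos s1])
    also have "(\<Prod>j<n. 1 + b j y * (y j - mm n p j y)) = (\<Prod>j<n. if j = k then 1 + artanh (mm n p k y) * (y k - mm n p k y) else 1)"
      unfolding b_def by (rule prod.cong) auto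
    also have "\<dots> = 1 + artanh (mm n p k y) * (y k - mm n p k y)"
      using k by (simp add: prod.delta)
    finally show ?thesis .
  qed
  have "1 = (\<Sum>y\<in>cube n. p y * (1 + artanh (mm n p k y) * (y k - mm n p k y)))"
    using A B by simp
  also have "\<dots> = (\<Sum>y\<in>cube n. p y) + (\<Sum>y\<in>cube n. p y * ((y k - mm n p k y) * artanh (mm n p k y)))"
    unfolding sum.distrib[symmetric] by (intro sum.cong) (auto simp: algebra_simps)
  finally show ?thesis using s1 by simp
qed

lemma coupling_marginal:
  assumes pos: "\<And>z. z \<in> cube n \<Longrightarrow> p z > 0" and s1: "(\<Sum>z\<in>cube n. p z) = 1"
  shows "(\<Sum>y\<in>cube n. p y * (\<Prod>j<n. (1 + e j * ((y j - mm n p j y) / 2)) / 2)) = 1 / 2 ^ n"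
proof -
  define r where "r j y = mm n p j y + e j / 2 * (1 - (mm n p j y)^2)" for j y
  have pre: "r j y = r j z" if "\<forall>i<j. y i = z i" for j y z
    unfolding r_def using mm_pre[OF that, of n p] by auto
  have A: "(\<Sum>y\<in>cube n. \<Prod>j<n. (1 + y j * r j y) / 2) = 1" by (rule lemA[OF pre])
  have B: "(\<Prod>j<n. (1 + y j * r j y) / 2) = 2 ^ n * (p y * (\<Prod>j<n. (1 + e j * ((y j - mm n p j y) / 2)) / 2))"
    if y: "y \<in> cube n" for y
  proof -
    have "(\<Prod>j<n. (1 + y j * r j y) / 2) = p y * (\<Prod>j<n. 1 + e j / 2 * (y j - mm n p j y))"
      unfolding r_def by (rule prod_factor_lemma[OF y pos s1])
    also have "(\<Prod>j<n. 1 + e j / 2 * (y j - mm n p j y)) = (\<Prod>j<n. 2 * ((1 + e j * ((y j - mm n p j y) / 2)) / 2))"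
      by (rule prod.cong) auto
    also have "\<dots> = 2 ^ n * (\<Prod>j<n. (1 + e j * ((y j - mm n p j y) / 2)) / 2)"
      unfolding prod.distrib by simp
    finally show ?thesis by simp
  qed
  have "1 = (\<Sum>y\<in>cube n. 2 ^ n * (p y * (\<Prod>j<n. (1 + e j * ((y j - mm n p j y) / 2)) / 2)))"
    using A B by simp
  also have "\<dots> = 2 ^ n * (\<Sum>y\<in>cube n. p y * (\<Prod>j<n. (1 + e j * ((y j - mm n p j y) / 2)) / 2))"
    by (simp add: sum_distrib_left)
  finally show ?thesis by (simp add: field_simps)
qed



theorem proposition2p14:
  "\<exists>\<kappa>::real. \<forall>(n::nat) (f::(nat \<Rightarrow> real) \<Rightarrow> real).
     unif_int n (\<lambda>x. exp (f x)) = 1 \<longrightarrow>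
     calI n f \<le> rel_entropy n f
       + \<kappa> * unif_int n (\<lambda>x. Max ((\<lambda>y. inner_n n (dgrad f y) x) ` cube n))"
proof (intro exI[of _ 2] allI impI)
  fix n and f :: "(nat \<Rightarrow> real) \<Rightarrow> real"
  assume hyp: "unif_int n (\<lambda>x. exp (f x)) = 1"
  define N where "N = real (card (cube n))"
  have N: "N = 2 ^ n" unfolding N_def card_cube by simp
  have Npos: "N > 0" unfolding N by simp
  define p where "p x = exp (f x) / N" for x
  have pos: "\<And>z. z \<in> cube n \<Longrightarrow> p z > 0" unfolding p_def using Npos by simp
  have s1: "(\<Sum>z\<in>cube n. p z) = 1"
  proof -
    have "(\<Sum>z\<in>cube n. p z) = (\<Sum>z\<in>cube n. exp (f z)) / N"
      unfolding p_def by (simp add: sum_divide_distrib)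
    then show ?thesis using hyp unfolding unif_int_def N_def by simp
  qed
  define m where "m k y = mm n p k y" for k y
  define g where "g k y = dpartial f k y" for k y
  define d where "d k y = y k - m k y" for k y
  have mb: "\<bar>m k y\<bar> < 1" if "y \<in> cube n" "k < n" for k y
    unfolding m_def by (rule mm_bound[OF that pos])
  define W where "W = unif_int n (\<lambda>x. Max ((\<lambda>y. inner_n n (dgrad f y) x) ` cube n))"
  define F where "F k x = ln (1 + x k * m k x) - d k x * artanh (m k x)
      + g k x * (tanh (g k x) - x k) + g k x * d k x" for k x

  have cI: "calI n f = (\<Sum>x\<in>cube n. p x * (\<Sum>k<n. Ifun (tanh (g k x))))"
  proof -
    have "calI n f = (\<Sum>x\<in>cube n. exp (f x) * (\<Sum>k<n. Ifun (tanh (g k x)))) / N"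
      unfolding calI_def unif_int_def Irate_def grad_Lambda_def dgrad_def Ifun_def N_def g_def ..
    also have "\<dots> = (\<Sum>x\<in>cube n. p x * (\<Sum>k<n. Ifun (tanh (g k x))))"
      unfolding sum_divide_distrib p_def by (intro sum.cong) auto
    finally show ?thesis .
  qed

  have pw: "Ifun (tanh (g k x)) \<le> F k x" if x: "x \<in> cube n" and k: "k < n" for x k
  proof -
    define t where "t = tanh (g k x)"
    have t1: "\<bar>t\<bar> < 1" unfolding t_def using tanh_real_bounds[of "g k x"] by auto
    have "Ifun t + artanh t * (m k x - t) \<le> Ifun (m k x)"
      by (rule Ifun_tangent[OF t1]) (use mb[OF x k] in simp)
    then have i1: "Ifun t \<le> Ifun (m k x) - g k x * (m k x - t)"
      unfolding t_def artanh_tanh_real by simp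
    have i2: "Ifun (m k x) = ln (1 + x k * m k x) - (x k - m k x) * artanh (m k x)"
      by (rule Ifun_alt[OF cube_mem[OF x k] mb[OF x k]])
    have i3: "g k x * (t - x k) + g k x * (x k - m k x) = - (g k x * (m k x - t))"
      by (simp add: algebra_simps)
    show ?thesis using i1 i2 i3 unfolding F_def d_def t_def[symmetric] by linarith
  qed

  have step1: "calI n f \<le> (\<Sum>x\<in>cube n. p x * (\<Sum>k<n. F k x))"
    unfolding cI
    by (intro sum_mono mult_left_mono) (auto intro: pw less_imp_le[OF pos])

  have lnsum: "(\<Sum>k<n. ln (1 + x k * m k x)) = f x" if x: "x \<in> cube n" for x
  proof -
    have fpos: "1 + x k * m k x > 0" if k: "k < n" for k
      using cube_mem[OF x k] mb[OF x k] by (auto simp: abs_less_iff)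
    have "(\<Sum>k<n. ln (1 + x k * m k x)) = ln (\<Prod>k<n. (1 + x k * m k x))"
      by (rule ln_prod[symmetric]) (use fpos in force)+
    also have "(\<Prod>k<n. (1 + x k * m k x)) = (\<Prod>k<n. 2 * ((1 + x k * m k x) / 2))"
      by (rule prod.cong) auto
    also have "\<dots> = 2 ^ n * (\<Prod>k<n. (1 + x k * m k x) / 2)"
      unfolding prod.distrib by simp
    also have "\<dots> = 2 ^ n * p x"
      using mm_prod[where p=p, OF x pos s1] unfolding m_def by simp
    also have "\<dots> = exp (f x)" unfolding p_def N by simp
    finally show ?thesis by simp
  qed
  have S1: "(\<Sum>x\<in>cube n. p x * (\<Sum>k<n. ln (1 + x k * m k x))) = rel_entropy n f"
  proof -
    have "rel_entropy n f = (\<Sum>x\<in>cube n. exp (f x) * f x) / N"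
      unfolding rel_entropy_def unif_int_def N_def ..
    also have "\<dots> = (\<Sum>x\<in>cube n. p x * f x)"
      unfolding sum_divide_distrib p_def by (intro sum.cong) auto
    also have "\<dots> = (\<Sum>x\<in>cube n. p x * (\<Sum>k<n. ln (1 + x k * m k x)))"
      by (intro sum.cong) (auto simp: lnsum)
    finally show ?thesis by simp
  qed
  have S2: "(\<Sum>k<n. \<Sum>x\<in>cube n. p x * (d k x * artanh (m k x))) = 0"
    by (rule sum.neutral) (use martingale_zero[where p=p, OF pos s1] in \<open>auto simp: d_def m_def\<close>)
  have S3k: "(\<Sum>x\<in>cube n. p x * (g k x * (tanh (g k x) - x k))) = 0" if k: "k < n" for k
  proof -
    have z: "(p (x(k:=1)) * (g k (x(k:=1)) * (tanh (g k (x(k:=1))) - (x(k:=1)) k)) +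
          p (x(k:=-1)) * (g k (x(k:=-1)) * (tanh (g k (x(k:=-1))) - (x(k:=-1)) k))) / 2 = 0" for x
    proof -
      have gk: "g k (x(k:=s)) = (f (x(k:=1)) - f (x(k:=-1))) / 2" for s
        unfolding g_def dpartial_def by simp
      have AB: "exp (f (x(k:=1))) + exp (f (x(k:=-1))) > 0" by (simp add: add_pos_pos)
      show ?thesis unfolding gk tanh_half_diff p_def using AB Npos
        by (simp add: field_simps)
    qed
    show ?thesis by (subst flip_sum[OF k]) (simp only: z sum.neutral_const)
  qed
  have S3: "(\<Sum>k<n. \<Sum>x\<in>cube n. p x * (g k x * (tanh (g k x) - x k))) = 0"
    by (rule sum.neutral) (auto simp: S3k)
  define D where "D y e = (\<Prod>j<n. (1 + e j * (d j y / 2)) / 2)" for y e :: "nat \<Rightarrow> real"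
  have Dnn: "D y e \<ge> 0" if y: "y \<in> cube n" and e: "e \<in> cube n" for y e
    unfolding D_def
  proof (rule prod_nonneg)
    fix j assume "j \<in> {..<n}"
    then have j: "j < n" by simp
    show "0 \<le> (1 + e j * (d j y / 2)) / 2"
      using cube_mem[OF y j] cube_mem[OF e j] mb[OF y j] by (auto simp: d_def abs_less_iff field_simps)
  qed
  have Dmom: "(\<Sum>e\<in>cube n. D y e * e k) = d k y / 2" if k: "k < n" for y k
    unfolding D_def using lemB[where c="\<lambda>j. d j y / 2", OF k] by simp
  have Dmarg: "(\<Sum>y\<in>cube n. p y * D y e) = 1 / 2 ^ n" for e
    unfolding D_def d_def m_def by (rule coupling_marginal[OF pos s1])
  define M where "M e = Max ((\<lambda>y. inner_n n (dgrad f y) e) ` cube n)" for e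
  have Mge: "inner_n n (dgrad f y) e \<le> M e" if "y \<in> cube n" for y e
    unfolding M_def by (rule Max_ge) (use that in auto)
  have Weq: "W = (\<Sum>e\<in>cube n. M e) / 2 ^ n"
    unfolding W_def unif_int_def M_def card_cube by simp
  have c1: "(\<Sum>k<n. g k x * d k x) = 2 * (\<Sum>e\<in>cube n. D x e * inner_n n (dgrad f x) e)" for x
  proof -
    have "(\<Sum>k<n. g k x * d k x) = 2 * (\<Sum>k<n. \<Sum>e\<in>cube n. g k x * (D x e * e k))"
      unfolding sum_distrib_left[symmetric] by (simp add: Dmom sum_distrib_left)
    also have "(\<Sum>k<n. \<Sum>e\<in>cube n. g k x * (D x e * e k)) = (\<Sum>e\<in>cube n. \<Sum>k<n. g k x * (D x e * e k))"
      by (rule sum.swap)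
    also have "\<dots> = (\<Sum>e\<in>cube n. D x e * inner_n n (dgrad f x) e)"
      unfolding inner_n_def dgrad_def g_def sum_distrib_left by (intro sum.cong) (auto simp: algebra_simps)
    finally show ?thesis .
  qed
  have S4: "(\<Sum>x\<in>cube n. p x * (\<Sum>k<n. g k x * d k x)) \<le> 2 * W"
  proof -
    have "(\<Sum>x\<in>cube n. p x * (\<Sum>k<n. g k x * d k x))
        = 2 * (\<Sum>x\<in>cube n. p x * (\<Sum>e\<in>cube n. D x e * inner_n n (dgrad f x) e))"
      unfolding c1 sum_distrib_left by (intro sum.cong) (auto simp: algebra_simps)
    also have "\<dots> \<le> 2 * (\<Sum>x\<in>cube n. p x * (\<Sum>e\<in>cube n. D x e * M e))"
      by (intro mult_left_mono sum_mono mult_left_mono)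
         (auto intro: Mge Dnn less_imp_le[OF pos])
    also have "(\<Sum>x\<in>cube n. p x * (\<Sum>e\<in>cube n. D x e * M e)) = (\<Sum>e\<in>cube n. M e * (\<Sum>x\<in>cube n. p x * D x e))"
      unfolding sum_distrib_left by (subst sum.swap) (auto intro!: sum.cong simp: algebra_simps)
    also have "\<dots> = (\<Sum>e\<in>cube n. M e) / 2 ^ n"
      unfolding Dmarg by (simp add: sum_divide_distrib)
    finally show ?thesis unfolding Weq by simp
  qed
  have dec: "(\<Sum>x\<in>cube n. p x * (\<Sum>k<n. F k x)) =
      (\<Sum>x\<in>cube n. p x * (\<Sum>k<n. ln (1 + x k * m k x)))
      - (\<Sum>k<n. \<Sum>x\<in>cube n. p x * (d k x * artanh (m k x)))
      + (\<Sum>k<n. \<Sum>x\<in>cube n. p x * (g k x * (tanh (g k x) - x k)))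
      + (\<Sum>x\<in>cube n. p x * (\<Sum>k<n. g k x * d k x))"
  proof -
    have e: "p x * (\<Sum>k<n. F k x) = p x * (\<Sum>k<n. ln (1 + x k * m k x))
      - (\<Sum>k<n. p x * (d k x * artanh (m k x)))
      + (\<Sum>k<n. p x * (g k x * (tanh (g k x) - x k)))
      + p x * (\<Sum>k<n. g k x * d k x)" for x
    proof -
      have "p x * (\<Sum>k<n. F k x) = (\<Sum>k<n. p x * ln (1 + x k * m k x) - p x * (d k x * artanh (m k x))
         + p x * (g k x * (tanh (g k x) - x k)) + p x * (g k x * d k x))"
        unfolding F_def sum_distrib_left by (intro sum.cong) (auto simp: algebra_simps)
      then show ?thesis by (simp only: sum.distrib sum_subtractf sum_distrib_left)
    qed
    show ?thesis
      unfolding e sum.distrib sum_subtractf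
      by (simp add: sum.swap[of _ "{..<n}" "cube n"])
  qed
  show "calI n f \<le> rel_entropy n f + 2 * W"
    using step1 dec S1 S2 S3 S4 by linarith
qed

end
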